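(* For any $a,b>0$, \[ a\sharp b+\gamma(a,b)\,L(a,b)\le a\nabla b,\qquad\text{where}\qquad \gamma(a,b):=\frac{\ln^{2}(b/a)}{2\left(\ln^{2}(b/a)+4\right)}\ \ (\ge 0). \]
   Context: $a\sharp b=\sqrt{ab}$, $a\nabla b=\frac{a+b}{2}$, and $L(a,b)=\frac{b-a}{\ln b-\ln a}$ for $a\ne b$ is the logarithmic mean, with the usual convention $L(a,a)=a$. *)

theory Defs
  imports Complex_Main
begin

definition geom_mean :: "real \<Rightarrow> real \<Rightarrow> real" where
  "geom_mean a b = sqrt (a * b)"

definition arith_mean :: "real \<Rightarrow> real \<Rightarrow> real" where
  "arith_mean a b = (a + b) / 2"

definition log_mean :: "real \<Rightarrow> real \<Rightarrow> real" where
  "log_mean a b = (if a = b then a else (b - a) / (ln b - ln a))"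

definition gamma_coef :: "real \<Rightarrow> real \<Rightarrow> real" where
  "gamma_coef a b = (ln (b / a))\<^sup>2 / (2 * ((ln (b / a))\<^sup>2 + 4))"

end

theory Submission
  imports Defs
begin

lemma key_hyp:
  fixes u :: real assumes "u \<ge> 0"
  shows "u * cosh u \<le> (1 + 4*u^2) * sinh u"
proof -
  let ?f = "\<lambda>u::real. (1 + 4*u^2) * sinh u - u * cosh u"
  have "?f 0 \<le> ?f u"
  proof (rule DERIV_nonneg_imp_nondecreasing[OF assms])
    fix x :: real assume x: "0 \<le> x" "x \<le> u"
    have "DERIV ?f x :> (8*x*sinh x + (1+4*x^2)*cosh x - (cosh x + x * sinh x))"
      by (auto intro!: derivative_eq_intros simp: power2_eq_square)
    moreover have "8*x*sinh x + (1+4*x^2)*cosh x - (cosh x + x * sinh x) = 7*x*sinh x + 4*x^2*cosh x"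
      by (simp add: algebra_simps)
    moreover have "7*x*sinh x + 4*x^2*cosh x \<ge> 0" using x by simp
    ultimately show "\<exists>y. DERIV ?f x :> y \<and> y \<ge> 0" by auto
  qed
  then show ?thesis by simp
qed

lemma key_exp:
  fixes u :: real assumes "u \<ge> 0"
  shows "u * (exp u ^ 4 - 1) \<le> (1 + 4*u^2) * (exp u ^ 2 - 1)^2"
proof -
  define x where "x = exp u"
  have x1: "x \<ge> 1" using assms by (simp add: x_def)
  have ei: "exp (-u) = 1 / x" by (simp add: x_def exp_minus field_simps)
  have "u * ((x + 1/x)/2) \<le> (1 + 4*u^2) * ((x - 1/x)/2)"
    using key_hyp[OF assms] by (simp add: cosh_field_def sinh_field_def ei x_def[symmetric])
  hence "u * (x + 1/x) * x \<le> (1 + 4*u^2) * (x - 1/x) * x"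
    using x1 by (intro mult_right_mono) auto
  moreover have "(x + 1/x)*x = x^2+1" "(x - 1/x)*x = x^2-1" using x1 by (simp_all add: field_simps power2_eq_square)
  ultimately have h: "u * (x^2 + 1) \<le> (1 + 4*u^2) * (x^2 - 1)"
    by (simp add: mult.assoc)
  have "u * (x^2 + 1) * (x^2 - 1) \<le> (1 + 4*u^2) * (x^2 - 1) * (x^2 - 1)"
    using x1 by (intro mult_right_mono[OF h]) (simp add: one_le_power)
  thus ?thesis unfolding x_def[symmetric] by (simp add: algebra_simps power2_eq_square power4_eq_xxxx)
qed


lemma main_lt:
  fixes a b :: real
  assumes "a > 0" and "a < b"
  shows "geom_mean a b + gamma_coef a b * log_mean a b \<le> arith_mean a b"
proof -
  define u where "u = ln (b/a) / 4"
  define x where "x = exp u"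
  have u0: "u > 0" using assms by (simp add: u_def)
  have lb: "ln (b/a) = 4*u" by (simp add: u_def)
  have x4: "x^4 = b/a" unfolding x_def
    using assms by (simp add: exp_of_nat_mult[symmetric] u_def)
  have bx: "b = a * x^4" using x4 assms by (simp add: field_simps)
  have x0: "x > 0" by (simp add: x_def)
  have g: "geom_mean a b = a * x^2"
  proof -
    have "a*b = (a*x^2)^2" by (simp add: bx power2_eq_square power4_eq_xxxx)
    thus ?thesis unfolding geom_mean_def using assms x0 by simp
  qed
  have lnd: "ln b - ln a = 4*u" using assms lb by (simp add: ln_div)
  have l: "log_mean a b = (a*x^4 - a) / (4*u)"
    unfolding log_mean_def using assms lnd bx by simp
  have p: "1 + 4*u^2 > 0" by (simp add: add_pos_nonneg)
  have gc: "gamma_coef a b = 2*u^2 / (1 + 4*u^2)"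
    unfolding gamma_coef_def lb using p by (simp add: field_simps power2_eq_square)
  have ar: "arith_mean a b = (a + a*x^4)/2" unfolding arith_mean_def bx ..
  have k: "u * (x ^ 4 - 1) \<le> (1 + 4*u^2) * (x ^ 2 - 1)^2"
    using key_exp[of u] u0 by (simp add: x_def)
  have "2*u^2 / (1 + 4*u^2) * ((a*x^4 - a) / (4*u)) = a * (u * (x^4 - 1) / (2*(1 + 4*u^2)))"
    using u0 p by (simp add: divide_simps) (simp add: algebra_simps power2_eq_square)
  also have "\<dots> \<le> a * ((x ^ 2 - 1)^2 / 2)"
    using k p assms by (intro mult_left_mono) (auto simp: divide_simps algebra_simps)
  finally have "2*u^2 / (1 + 4*u^2) * ((a*x^4 - a) / (4*u)) \<le> a * ((x ^ 2 - 1)^2 / 2)" .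
  thus ?thesis unfolding g l gc ar
    by (simp add: algebra_simps power2_eq_square power4_eq_xxxx)
qed

theorem corollary2p5:
  fixes a b :: real
  assumes "a > 0" and "b > 0"
  shows "geom_mean a b + gamma_coef a b * log_mean a b \<le> arith_mean a b"
proof (cases a b rule: linorder_cases)
  case less thus ?thesis using main_lt assms by blast
next
  case equal thus ?thesis using assms by (simp add: geom_mean_def gamma_coef_def log_mean_def arith_mean_def)
next
  case greater
  have "geom_mean b a + gamma_coef b a * log_mean b a \<le> arith_mean b a"
    using main_lt assms greater by blast
  moreover have "geom_mean b a = geom_mean a b" by (simp add: geom_mean_def mult.commute)
  moreover have "arith_mean b a = arith_mean a b" by (simp add: arith_mean_def)
  moreover have "log_mean b a = log_mean a b" using greater
    by (simp add: log_mean_def) (metis minus_diff_eq minus_divide_divide)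
  moreover have "gamma_coef b a = gamma_coef a b"
    using assms by (simp add: gamma_coef_def ln_div power2_eq_square algebra_simps)
  ultimately show ?thesis by simp
qed

end
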